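(* For every $0<p<q<1$ there exists a real sequence $\{a_n\}_{n\geq 0}$ such that $\{a_n^p\}_{n\geq 0}$ converges to $0$ but $\{a_n^q\}_{n\geq 0}$ does not converge.
   Context: For a real sequence $\{a_n\}_{n\geq0}$ and $0<r<1$, $a^r_n=\sum_{i=0}^n\binom{n}{i}r^i(1-r)^{n-i}a_i$. *)

theory Defs
  imports Complex_Main
begin

text \<open>Binomial (Euler-type) transform: a^r_n = sum_{i=0}^n C(n,i) r^i (1-r)^(n-i) a_i.\<close>
definition binom_transform :: "real \<Rightarrow> (nat \<Rightarrow> real) \<Rightarrow> nat \<Rightarrow> real" where
  "binom_transform r a n = (\<Sum>i=0..n. real (n choose i) * r ^ i * (1 - r) ^ (n - i) * a i)"

end

theory Submission
  imports Defs
begin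

lemma bt_geom: "binom_transform r (\<lambda>n. x ^ n) n = (r * x + (1 - r)) ^ n"
proof -
  have "(r * x + (1 - r)) ^ n = (\<Sum>k\<le>n. real (n choose k) * (r*x)^k * (1-r)^(n-k))"
    by (rule binomial_ring)
  also have "\<dots> = (\<Sum>k=0..n. real (n choose k) * r ^ k * (1 - r) ^ (n - k) * x ^ k)"
    by (simp add: atLeast0AtMost power_mult_distrib mult_ac)
  finally show ?thesis by (simp add: binom_transform_def)
qed

lemma not_conv_alt: "\<not> convergent (\<lambda>n. (-1::real) ^ n)"
proof
  assume "convergent (\<lambda>n. (-1::real) ^ n)"
  then obtain L where L: "(\<lambda>n. (-1::real) ^ n) \<longlonglongrightarrow> L" by (auto simp: convergent_def)
  have "(\<lambda>n. (-1::real) ^ Suc n) \<longlonglongrightarrow> L" using L by (rule LIMSEQ_Suc)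
  hence "(\<lambda>n. (-1::real) ^ Suc n - (-1) ^ n) \<longlonglongrightarrow> L - L" using L by (rule tendsto_diff)
  moreover have "(\<lambda>n. (-1::real) ^ Suc n - (-1) ^ n) = (\<lambda>n. -2 * (-1) ^ n)" by auto
  ultimately have "(\<lambda>n. -2 * (-1::real) ^ n) \<longlonglongrightarrow> 0" by simp
  hence "(\<lambda>n. (-1/2) * (-2 * (-1::real) ^ n)) \<longlonglongrightarrow> (-1/2) * 0" by (rule tendsto_mult_left)
  hence "(\<lambda>n. (-1::real) ^ n) \<longlonglongrightarrow> 0" by simp
  have "(\<lambda>n. norm ((-1::real) ^ n)) \<longlonglongrightarrow> 0" using \<open>(\<lambda>n. (-1::real) ^ n) \<longlonglongrightarrow> 0\<close> by (rule tendsto_norm_zero)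
  hence "(\<lambda>n. 1::real) \<longlonglongrightarrow> 0" by simp
  thus False by (simp add: LIMSEQ_const_iff)
qed

theorem proposition2:
  fixes p q :: real
  assumes "0 < p" and "p < q" and "q < 1"
  shows "\<exists>a :: nat \<Rightarrow> real. binom_transform p a \<longlonglongrightarrow> 0 \<and> \<not> convergent (binom_transform q a)"
proof (intro exI conjI)
  define x where "x = 1 - 2 / q"
  have q0: "q > 0" using assms by simp
  have eq: "q * x + (1 - q) = -1" using q0 by (simp add: x_def field_simps)
  have ep: "p * x + (1 - p) = 1 - 2 * p / q" by (simp add: x_def field_simps)
  have "p / q < 1" using assms q0 by simp
  moreover have "p / q > 0" using assms q0 by simp
  ultimately have "\<bar>1 - 2 * p / q\<bar> < 1" by auto
  hence "(\<lambda>n. (1 - 2 * p / q) ^ n) \<longlonglongrightarrow> 0" by (rule LIMSEQ_abs_realpow_zero2)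
  moreover have "binom_transform p (\<lambda>n. x ^ n) = (\<lambda>n. (1 - 2 * p / q) ^ n)"
    by (rule ext) (simp only: bt_geom ep)
  ultimately show "binom_transform p (\<lambda>n. x ^ n) \<longlonglongrightarrow> 0" by simp
  show "\<not> convergent (binom_transform q (\<lambda>n. x ^ n))"
  proof -
    have "binom_transform q (\<lambda>n. x ^ n) = (\<lambda>n. (-1::real) ^ n)"
      by (rule ext) (simp only: bt_geom eq)
    thus ?thesis using not_conv_alt by simp
  qed
qed

end
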